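(* Let $I\subset\mathbb{R}$ be an open interval, let $\bm{a}:I\to\mathbb{R}^2_1$ be a frontal with Gauss mapping $\bm{\nu}:I\to H^1$ (or $S^1_1$), and let $r:I\to\mathbb{R}^+$ be a smooth positive function. Suppose the pseudo-circle family $C_{(\bm{a}(t),\pm r(t))}$ creates an envelope $f:I\to\mathbb{R}^2_1$, and write $f(t)=\bm{a}(t)+r(t)\tilde{\bm{\nu}}(t)$ with $\tilde{\bm{\nu}}:I\to S^1_1$ (for the family with $+r$) or $\tilde{\bm{\nu}}:I\to H^1$ (for the family with $-r$). Then: (1) If $\epsilon_{\tilde{\bm{\nu}}}\cdot\epsilon_{\bm{\mu}}=1$, then $\tilde{\bm{\nu}}(t)=\cosh\theta(t)\bm{\mu}(t)\pm\sinh\theta(t)\bm{\nu}(t)$ or $\tilde{\bm{\nu}}(t)=-\cosh\theta(t)\bm{\mu}(t)\pm\sinh\theta(t)\bm{\nu}(t)$, where $\theta:I\to\mathbb{R}$ is a function satisfying $\frac{dr}{dt}(t)+\beta(t)\cosh\theta(t)=0$ or $\frac{dr}{dt}(t)-\beta(t)\cosh\theta(t)=0$ for all $t\in I$. (2) If $\epsilon_{\tilde{\bm{\nu}}}\cdot\epsilon_{\bm{\mu}}=-1$, then $\tilde{\bm{\nu}}(t)=\sinh\theta(t)\bm{\mu}(t)\pm\cosh\theta(t)\bm{\nu}(t)$, where $\theta:I\to\mathbb{R}$ is a function satisfying $\frac{dr}{dt}(t)-\beta(t)\sinh\theta(t)=0$ for all $t\in I$.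
   Context: All objects are $C^\infty$. The Minkowski plane $\mathbb{R}^2_1$ is $\mathbb{R}^2$ with $\langle\bm{x},\bm{y}\rangle=-x_1y_1+x_2y_2$; $S^1_1=\{\bm{x}:\langle\bm{x},\bm{x}\rangle=1\}$, $H^1=\{\bm{x}:\langle\bm{x},\bm{x}\rangle=-1\}$. For non-lightlike $\bm{x}$, $\epsilon_{\bm{x}}=1$ if $\bm{x}$ is spacelike ($\langle\bm{x},\bm{x}\rangle>0$) and $-1$ if timelike ($\langle\bm{x},\bm{x}\rangle<0$); for a map into $S^1_1$ or $H^1$ this sign is constant. A smooth $\bm{a}:I\to\mathbb{R}^2_1$ is a spacelike (resp. timelike) frontal if there is smooth $\bm{\nu}:I\to H^1$ (resp. $S^1_1$), the Gauss mapping, with $\langle\frac{d\bm{a}}{dt},\bm{\nu}\rangle=0$. $\bm{\mu}:I\to S^1_1$ (resp. $H^1$) is a smooth unit field with $\langle\bm{\mu},\bm{\nu}\rangle=0$, and $\frac{d\bm{a}}{dt}=\beta\bm{\mu}$ with $\beta(t)=\epsilon_{\bm{\mu}}\langle\bm{\mu}(t),\frac{d\bm{a}}{dt}(t)\rangle$. $C_{(\bm{a}(t),\pm r(t))}=\{\bm{x}:\langle\bm{x}-\bm{a}(t),\bm{x}-\bm{a}(t)\rangle=\pm r(t)^2\}$. An envelope of $C_{(\bm{a}(t),\pm r(t))}$ is a smooth $f:I\to\mathbb{R}^2_1$ with $f(t)\in C_{(\bm{a}(t),\pm r(t))}$ and $\langle\frac{df}{dt}(t),f(t)-\bm{a}(t)\rangle=0$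 for all $t$. *)

theory Defs
  imports "HOL-Analysis.Analysis"
begin

definition mink :: "real \<times> real \<Rightarrow> real \<times> real \<Rightarrow> real" where
  "mink x y = - fst x * fst y + snd x * snd y"

definition S11 :: "(real \<times> real) set" where
  "S11 = {x. mink x x = 1}"

definition H1 :: "(real \<times> real) set" where
  "H1 = {x. mink x x = -1}"

definition eps :: "real \<times> real \<Rightarrow> real" where
  "eps x = (if mink x x > 0 then 1 else -1)"

definition smooth_on :: "real set \<Rightarrow> (real \<Rightarrow> 'a::real_normed_vector) \<Rightarrow> bool" where
  "smooth_on I g \<longleftrightarrow> (\<exists>D :: nat \<Rightarrow> real \<Rightarrow> 'a. (\<forall>t\<in>I. D 0 t = g t) \<and>
      (\<forall>n. \<forall>t\<in>I. (D n has_vector_derivative D (Suc n) t) (at t)))"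

definition open_interval :: "real set \<Rightarrow> bool" where
  "open_interval I \<longleftrightarrow> is_interval I \<and> open I \<and> I \<noteq> {}"

definition spacelike_frontal_frame ::
  "real set \<Rightarrow> (real \<Rightarrow> real \<times> real) \<Rightarrow> (real \<Rightarrow> real \<times> real) \<Rightarrow> (real \<Rightarrow> real \<times> real) \<Rightarrow> bool" where
  "spacelike_frontal_frame I a \<nu> \<mu> \<longleftrightarrow> smooth_on I a \<and> smooth_on I \<nu> \<and> smooth_on I \<mu> \<and>
     (\<forall>t\<in>I. \<nu> t \<in> H1 \<and> \<mu> t \<in> S11 \<and> mink (\<mu> t) (\<nu> t) = 0 \<and>
        mink (vector_derivative a (at t)) (\<nu> t) = 0)"

definition timelike_frontal_frame ::
  "real set \<Rightarrow> (real \<Rightarrow> real \<times> real) \<Rightarrow> (real \<Rightarrow> real \<times> real) \<Rightarrow> (real \<Rightarrow> real \<times> real) \<Rightarrow> bool" where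
  "timelike_frontal_frame I a \<nu> \<mu> \<longleftrightarrow> smooth_on I a \<and> smooth_on I \<nu> \<and> smooth_on I \<mu> \<and>
     (\<forall>t\<in>I. \<nu> t \<in> S11 \<and> \<mu> t \<in> H1 \<and> mink (\<mu> t) (\<nu> t) = 0 \<and>
        mink (vector_derivative a (at t)) (\<nu> t) = 0)"

text \<open>beta(t) = eps_mu <mu(t), a'(t)>, so that a' = beta mu.\<close>
definition beta :: "(real \<Rightarrow> real \<times> real) \<Rightarrow> (real \<Rightarrow> real \<times> real) \<Rightarrow> real \<Rightarrow> real" where
  "beta a \<mu> t = eps (\<mu> t) * mink (\<mu> t) (vector_derivative a (at t))"

text \<open>Pseudo-circle C_(c, +rho) (sg = 1) or C_(c, -rho) (sg = -1):
  <x-c,x-c> = sg * rho^2.\<close>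
definition pcircle :: "real \<times> real \<Rightarrow> real \<Rightarrow> real \<Rightarrow> (real \<times> real) set" where
  "pcircle c sg \<rho> = {x. mink (x - c) (x - c) = sg * \<rho>\<^sup>2}"

definition is_envelope ::
  "real set \<Rightarrow> (real \<Rightarrow> real \<times> real) \<Rightarrow> real \<Rightarrow> (real \<Rightarrow> real) \<Rightarrow> (real \<Rightarrow> real \<times> real) \<Rightarrow> bool" where
  "is_envelope I a sg r f \<longleftrightarrow> smooth_on I f \<and>
     (\<forall>t\<in>I. f t \<in> pcircle (a t) sg (r t) \<and> mink (vector_derivative f (at t)) (f t - a t) = 0)"

end

theory Submission imports Defs begin
lemma vd_fst: "(u has_vector_derivative u') (at t) \<Longrightarrow> ((\<lambda>t. fst (u t)) has_real_derivative fst u') (at t)"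
  unfolding has_real_derivative_iff_has_vector_derivative has_vector_derivative_def
  by (drule has_derivative_fst) simp
lemma vd_snd: "(u has_vector_derivative u') (at t) \<Longrightarrow> ((\<lambda>t. snd (u t)) has_real_derivative snd u') (at t)"
  unfolding has_real_derivative_iff_has_vector_derivative has_vector_derivative_def
  by (drule has_derivative_snd) simp
lemma mink_deriv:
  assumes "(u has_vector_derivative u') (at t)" "(v has_vector_derivative v') (at t)"
  shows "((\<lambda>t. mink (u t) (v t)) has_real_derivative (mink u' (v t) + mink (u t) v')) (at t)"
proof -
  note a = vd_fst[OF assms(1)] vd_snd[OF assms(1)] vd_fst[OF assms(2)] vd_snd[OF assms(2)]
  show ?thesis unfolding mink_def
    by (rule derivative_eq_intros a refl)+ (simp add: algebra_simps)
qed
lemma smooth_D: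
  assumes "smooth_on I g" "open I"
  shows "\<exists>g'. \<forall>t\<in>I. (g has_vector_derivative g' t) (at t)"
proof -
  obtain D where D: "\<forall>t\<in>I. D 0 t = g t" "\<forall>n. \<forall>t\<in>I. (D n has_vector_derivative D (Suc n) t) (at t)"
    using assms(1) unfolding smooth_on_def by blast
  have "(g has_vector_derivative D 1 t) (at t)" if "t \<in> I" for t
    using has_vector_derivative_transform_within_open[OF D(2)[rule_format, where n=0 and t=t, OF that] assms(2) that] D(1)
    by simp
  then show ?thesis by blast
qed
lemma frame_decomp:
  fixes m n v :: "real \<times> real"
  assumes e: "e = 1 \<or> e = -1" and mm: "mink m m = e" and nn: "mink n n = -e" and mn: "mink m n = 0"
  shows "v = (e * mink v m) *\<^sub>R m + (- e * mink v n) *\<^sub>R n"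
proof -
  obtain m1 m2 where m: "m = (m1, m2)" by (cases m)
  obtain n1 n2 where n: "n = (n1, n2)" by (cases n)
  obtain v1 v2 where v: "v = (v1, v2)" by (cases v)
  have h1: "m2^2 = m1^2 + e" using mm by (simp add: m mink_def power2_eq_square)
  have h2: "n2^2 = n1^2 - e" using nn by (simp add: n mink_def power2_eq_square)
  have h3: "m1 * n1 = m2 * n2" using mn by (simp add: m n mink_def)
  have ee: "e * e = 1" using e by auto
  have "(m1*n1)^2 = (m2*n2)^2" using h3 by simp
  then have "m1^2 * n1^2 = (m1^2 + e) * (n1^2 - e)" by (simp add: power_mult_distrib h1 h2)
  then have "e * (n1^2 - m1^2) = e * e" using ee by (simp add: algebra_simps)
  then have k1: "n1^2 - m1^2 = e" using e by auto
  have k2: "m1 * m2 = n1 * n2"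
  proof (cases "n1 = 0")
    case True
    then have "m1^2 = - e" using k1 by simp
    then have "m2^2 = 0" using h1 by simp
    then show ?thesis using True by simp
  next
    case False
    have "m1*m2*n1 = m2^2 * n2" using h3 by (simp add: power2_eq_square algebra_simps)
    also have "\<dots> = n1^2 * n2" using h1 k1 by simp
    finally have "(m1*m2) * n1 = (n1*n2) * n1" by (simp add: power2_eq_square algebra_simps)
    then show ?thesis using False by simp
  qed
  have c1: "v1 = e * (- v1 * m1 + v2 * m2) * m1 - e * (- v1 * n1 + v2 * n2) * n1"
  proof -
    have "e * (- v1 * m1 + v2 * m2) * m1 - e * (- v1 * n1 + v2 * n2) * n1
        = v1 * e * (n1^2 - m1^2) + v2 * e * (m1*m2 - n1*n2)" by (simp add: algebra_simps power2_eq_square)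
    also have "\<dots> = v1" using k1 k2 ee by simp
    finally show ?thesis by simp
  qed
  have c2: "v2 = e * (- v1 * m1 + v2 * m2) * m2 - e * (- v1 * n1 + v2 * n2) * n2"
  proof -
    have "e * (- v1 * m1 + v2 * m2) * m2 - e * (- v1 * n1 + v2 * n2) * n2
        = v1 * e * (n1*n2 - m1*m2) + v2 * e * (m2^2 - n2^2)" by (simp add: algebra_simps power2_eq_square)
    also have "\<dots> = v2" using h1 h2 k1 k2 ee by (simp add: algebra_simps)
    finally show ?thesis by simp
  qed
  show ?thesis using c1 c2 by (simp add: m n v mink_def)
qed

lemma mink_sym: "mink u v = mink v u" by (simp add: mink_def)
lemma mink_lin_left: "mink (x *\<^sub>R m + y *\<^sub>R n) w = x * mink m w + y * mink n w"
  by (simp add: mink_def algebra_simps)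
lemma mink_lin_right: "mink w (x *\<^sub>R m + y *\<^sub>R n) = x * mink w m + y * mink w n"
  by (simp add: mink_def algebra_simps)
lemma mink_diff_left: "mink (u - v) w = mink u w - mink v w"
  by (simp add: mink_def algebra_simps)
lemma mink_scale_right: "mink w (c *\<^sub>R u) = c * mink w u"
  by (simp add: mink_def algebra_simps)

theorem theorem2:
  fixes I :: "real set"
    and a \<nu> \<mu> f \<nu>t :: "real \<Rightarrow> real \<times> real"
    and r :: "real \<Rightarrow> real"
  assumes I: "open_interval I"
    and frontal: "spacelike_frontal_frame I a \<nu> \<mu> \<or> timelike_frontal_frame I a \<nu> \<mu>"
    and r_smooth: "smooth_on I r"
    and r_pos: "\<forall>t\<in>I. r t > 0"
    and env: "(is_envelope I a 1 r f \<and> (\<forall>t\<in>I. \<nu>t t \<in> S11)) \<or>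
              (is_envelope I a (-1) r f \<and> (\<forall>t\<in>I. \<nu>t t \<in> H1))"
    and f_repr: "\<forall>t\<in>I. f t = a t + r t *\<^sub>R \<nu>t t"
  shows
    "((\<forall>t\<in>I. eps (\<nu>t t) * eps (\<mu> t) = 1) \<longrightarrow>
       (\<exists>\<theta> :: real \<Rightarrow> real.
          (\<forall>t\<in>I. (\<nu>t t = cosh (\<theta> t) *\<^sub>R \<mu> t + sinh (\<theta> t) *\<^sub>R \<nu> t \<or>
                   \<nu>t t = cosh (\<theta> t) *\<^sub>R \<mu> t - sinh (\<theta> t) *\<^sub>R \<nu> t) \<and>
                  deriv r t + beta a \<mu> t * cosh (\<theta> t) = 0) \<or>
          (\<forall>t\<in>I. (\<nu>t t = - cosh (\<theta> t) *\<^sub>R \<mu> t + sinh (\<theta> t) *\<^sub>R \<nu> t \<or>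
                   \<nu>t t = - cosh (\<theta> t) *\<^sub>R \<mu> t - sinh (\<theta> t) *\<^sub>R \<nu> t) \<and>
                  deriv r t - beta a \<mu> t * cosh (\<theta> t) = 0))) \<and>
     ((\<forall>t\<in>I. eps (\<nu>t t) * eps (\<mu> t) = -1) \<longrightarrow>
       (\<exists>\<theta> :: real \<Rightarrow> real.
          \<forall>t\<in>I. (\<nu>t t = sinh (\<theta> t) *\<^sub>R \<mu> t + cosh (\<theta> t) *\<^sub>R \<nu> t \<or>
                  \<nu>t t = sinh (\<theta> t) *\<^sub>R \<mu> t - cosh (\<theta> t) *\<^sub>R \<nu> t) \<and>
                 deriv r t - beta a \<mu> t * sinh (\<theta> t) = 0))"
proof -
  have oI: "open I" and cI: "connected I" using I unfolding open_interval_def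
    by (auto simp: is_interval_connected)
  obtain e where e: "e = 1 \<or> e = -1" and sa: "smooth_on I a" and s\<mu>: "smooth_on I \<mu>"
    and fr: "\<forall>t\<in>I. mink (\<mu> t) (\<mu> t) = e \<and> mink (\<nu> t) (\<nu> t) = - e \<and> mink (\<mu> t) (\<nu> t) = 0 \<and>
        mink (vector_derivative a (at t)) (\<nu> t) = 0 \<and> eps (\<mu> t) = e"
  proof (cases "spacelike_frontal_frame I a \<nu> \<mu>")
    case True
    then show ?thesis using that[of 1]
      unfolding spacelike_frontal_frame_def S11_def H1_def eps_def by auto
  next
    case False
    then have "timelike_frontal_frame I a \<nu> \<mu>" using frontal by blast
    then show ?thesis using that[of "-1"]
      unfolding timelike_frontal_frame_def S11_def H1_def eps_def by auto
  qed
  obtain sg where sg: "sg = 1 \<or> sg = -1" and envl: "is_envelope I a sg r f"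
    and nt: "\<forall>t\<in>I. mink (\<nu>t t) (\<nu>t t) = sg \<and> eps (\<nu>t t) = sg"
  proof (cases "is_envelope I a 1 r f \<and> (\<forall>t\<in>I. \<nu>t t \<in> S11)")
    case True
    then show ?thesis using that[of 1] unfolding S11_def eps_def by auto
  next
    case False
    then have "is_envelope I a (-1) r f \<and> (\<forall>t\<in>I. \<nu>t t \<in> H1)" using env by blast
    then show ?thesis using that[of "-1"] unfolding H1_def eps_def by auto
  qed
  have ee: "e * e = 1" using e by auto
  have sgsg: "sg * sg = 1" using sg by auto
  obtain a' where a': "\<forall>t\<in>I. (a has_vector_derivative a' t) (at t)" using smooth_D[OF sa oI] by blast
  obtain m' where m': "\<forall>t\<in>I. (\<mu> has_vector_derivative m' t) (at t)" using smooth_D[OF s\<mu> oI] by blast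
  have sf: "smooth_on I f" using envl unfolding is_envelope_def by blast
  obtain f' where f': "\<forall>t\<in>I. (f has_vector_derivative f' t) (at t)" using smooth_D[OF sf oI] by blast
  obtain r' where r': "\<forall>t\<in>I. (r has_vector_derivative r' t) (at t)" using smooth_D[OF r_smooth oI] by blast
  have rD: "(r has_real_derivative r' t) (at t)" if "t \<in> I" for t
    using r' that by (simp add: has_real_derivative_iff_has_vector_derivative)
  have dr: "deriv r t = r' t" if "t \<in> I" for t using DERIV_imp_deriv[OF rD[OF that]] .
  have va: "vector_derivative a (at t) = a' t" if "t \<in> I" for t
    using vector_derivative_at a' that by blast
  have vf: "vector_derivative f (at t) = f' t" if "t \<in> I" for t
    using vector_derivative_at f' that by blast
  have key: "mink (a' t) (\<nu>t t) = - sg * r' t" if tI: "t \<in> I" for t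
  proof -
    define g where "g s = mink (f s - a s) (f s - a s) - sg * (r s)^2" for s
    have fa: "((\<lambda>s. f s - a s) has_vector_derivative (f' t - a' t)) (at t)"
      using f' a' tI by (intro has_vector_derivative_diff) auto
    have d1: "(g has_real_derivative
        (mink (f' t - a' t) (f t - a t) + mink (f t - a t) (f' t - a' t)) - sg * (2 * r t * r' t)) (at t)"
    proof -
      have A: "((\<lambda>s. mink (f s - a s) (f s - a s)) has_real_derivative
          mink (f' t - a' t) (f t - a t) + mink (f t - a t) (f' t - a' t)) (at t)"
        using mink_deriv[OF fa fa] .
      have B: "((\<lambda>s. sg * (r s)^2) has_real_derivative sg * (2 * r t * r' t)) (at t)"
        by (rule DERIV_cong[OF DERIV_cmult[OF DERIV_power[OF rD[OF tI], of 2], of sg]]) simp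
      show ?thesis unfolding g_def using DERIV_diff[OF A B] by simp
    qed
    have g0: "g s = 0" if "s \<in> I" for s
      using envl that unfolding is_envelope_def pcircle_def g_def by auto
    have d2: "(g has_real_derivative 0) (at t)"
      by (rule has_field_derivative_transform_within_open[OF DERIV_const oI tI]) (simp add: g0)
    have eq: "mink (f' t - a' t) (f t - a t) + mink (f t - a t) (f' t - a' t) - sg * (2 * r t * r' t) = 0"
      using DERIV_unique[OF d1 d2] .
    have envt: "mink (f' t) (f t - a t) = 0" using envl tI vf[OF tI] unfolding is_envelope_def by auto
    have fat: "f t - a t = r t *\<^sub>R \<nu>t t" using f_repr tI by simp
    have s1: "mink (f t - a t) (f' t - a' t) = mink (f' t - a' t) (f t - a t)" by (rule mink_sym)
    have s2: "mink (f' t - a' t) (f t - a t) = - (r t * mink (a' t) (\<nu>t t))"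
      using envt unfolding fat mink_diff_left mink_scale_right by (auto simp: algebra_simps)
    have "2 * (- (r t * mink (a' t) (\<nu>t t))) - sg * (2 * r t * r' t) = 0"
      using eq s1 s2 by linarith
    then have "r t * (mink (a' t) (\<nu>t t) + sg * r' t) = 0" by algebra
    moreover have "r t \<noteq> 0" using r_pos tI by auto
    ultimately have "mink (a' t) (\<nu>t t) + sg * r' t = 0" by simp
    then show ?thesis by simp
  qed
  define x where "x t = e * mink (\<nu>t t) (\<mu> t)" for t
  define y where "y t = - e * mink (\<nu>t t) (\<nu> t)" for t
  have dec: "\<nu>t t = x t *\<^sub>R \<mu> t + y t *\<^sub>R \<nu> t" if "t \<in> I" for t
    unfolding x_def y_def using frame_decomp[OF e] fr that by blast
  have quad: "e * (x t)^2 - e * (y t)^2 = sg" if tI: "t \<in> I" for t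
  proof -
    have "sg = mink (x t *\<^sub>R \<mu> t + y t *\<^sub>R \<nu> t) (x t *\<^sub>R \<mu> t + y t *\<^sub>R \<nu> t)"
    proof -
      have "sg = mink (\<nu>t t) (\<nu>t t)" using nt tI by simp
      then show ?thesis using dec[OF tI] by simp
    qed
    also have "\<dots> = e * (x t)^2 - e * (y t)^2"
      using fr tI by (simp add: mink_lin_left mink_lin_right mink_sym[of "\<nu> t" "\<mu> t"] power2_eq_square algebra_simps)
    finally show ?thesis by simp
  qed
  have beq: "x t * e * beta a \<mu> t = - sg * r' t" if tI: "t \<in> I" for t
  proof -
    have "mink (a' t) (\<nu>t t) = x t * mink (a' t) (\<mu> t)"
      using bspec[OF fr tI] va[OF tI] dec[OF tI] by (simp add: mink_lin_right)
    moreover have "beta a \<mu> t = e * mink (a' t) (\<mu> t)"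
      unfolding beta_def using bspec[OF fr tI] va[OF tI] by (simp add: mink_sym)
    ultimately show ?thesis using key[OF tI] ee by (simp add: algebra_simps)
  qed
  have part1: "(\<forall>t\<in>I. eps (\<nu>t t) * eps (\<mu> t) = 1) \<longrightarrow>
       (\<exists>\<theta> :: real \<Rightarrow> real.
          (\<forall>t\<in>I. (\<nu>t t = cosh (\<theta> t) *\<^sub>R \<mu> t + sinh (\<theta> t) *\<^sub>R \<nu> t \<or>
                   \<nu>t t = cosh (\<theta> t) *\<^sub>R \<mu> t - sinh (\<theta> t) *\<^sub>R \<nu> t) \<and>
                  deriv r t + beta a \<mu> t * cosh (\<theta> t) = 0) \<or>
          (\<forall>t\<in>I. (\<nu>t t = - cosh (\<theta> t) *\<^sub>R \<mu> t + sinh (\<theta> t) *\<^sub>R \<nu> t \<or>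
                   \<nu>t t = - cosh (\<theta> t) *\<^sub>R \<mu> t - sinh (\<theta> t) *\<^sub>R \<nu> t) \<and>
                  deriv r t - beta a \<mu> t * cosh (\<theta> t) = 0))"
  proof
    assume h: "\<forall>t\<in>I. eps (\<nu>t t) * eps (\<mu> t) = 1"
    have sge: "sg = e" if "t \<in> I" for t
    proof -
      have "sg * e = 1" using h nt fr that by auto
      then show ?thesis using e sg by auto
    qed
    have xy: "(x t)^2 = 1 + (y t)^2" if tI: "t \<in> I" for t
    proof -
      have "e * ((x t)^2 - (y t)^2) = e * 1" using quad[OF tI] sge[OF tI] by (simp add: algebra_simps)
      then show ?thesis using e by auto
    qed
    have xb: "r' t + beta a \<mu> t * x t = 0" if tI: "t \<in> I" for t
    proof -
      have "e * (x t * beta a \<mu> t + r' t) = 0" using beq[OF tI] sge[OF tI] by (simp add: algebra_simps)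
      then show ?thesis using e by (auto simp: algebra_simps)
    qed
    define \<theta> where "\<theta> t = arsinh (y t)" for t
    have ch: "cosh (\<theta> t) = \<bar>x t\<bar>" if "t \<in> I" for t
    proof -
      have "(y t)^2 + 1 = (x t)^2" using xy[OF that] by simp
      then show ?thesis unfolding \<theta>_def cosh_arsinh_real by simp
    qed
    have sh: "sinh (\<theta> t) = y t" for t unfolding \<theta>_def by simp
    have xne: "x t \<noteq> 0" if "t \<in> I" for t
    proof -
      have "(x t)^2 \<ge> 1" using xy[OF that] zero_le_power2[of "y t"] by linarith
      then show ?thesis by (cases "x t = 0") auto
    qed
    have contx: "continuous_on I x"
    proof -
      have "continuous_on I (\<lambda>t. e * mink ((1 / r t) *\<^sub>R (f t - a t)) (\<mu> t))"
      proof -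
        have cf: "continuous_on I f" using f' by (meson continuous_at_imp_continuous_on has_vector_derivative_continuous)
        have ca: "continuous_on I a" using a' by (meson continuous_at_imp_continuous_on has_vector_derivative_continuous)
        have cm: "continuous_on I \<mu>" using m' by (meson continuous_at_imp_continuous_on has_vector_derivative_continuous)
        have cr: "continuous_on I r" using r' by (meson continuous_at_imp_continuous_on has_vector_derivative_continuous)
        show ?thesis unfolding mink_def
          using r_pos by (intro continuous_intros cf ca cm cr) auto
      qed
      moreover have "e * mink ((1 / r t) *\<^sub>R (f t - a t)) (\<mu> t) = x t" if "t \<in> I" for t
        using f_repr r_pos that unfolding x_def by auto
      ultimately show ?thesis by (rule continuous_on_eq)
    qed
    have sign: "(\<forall>t\<in>I. x t > 0) \<or> (\<forall>t\<in>I. x t < 0)"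
    proof (rule ccontr)
      assume "\<not> ?thesis"
      then obtain t1 t2 where t1: "t1 \<in> I" "x t1 \<le> 0" and t2: "t2 \<in> I" "x t2 \<ge> 0" by (meson not_less)
      have "connected (x ` I)" using connected_continuous_image[OF contx cI] .
      then have "is_interval (x ` I)" by (simp add: is_interval_connected_1)
      moreover have "x t1 \<in> x ` I" "x t2 \<in> x ` I" using t1 t2 by auto
      ultimately have "0 \<in> x ` I" using t1(2) t2(2) unfolding is_interval_1 by blast
      then show False using xne by auto
    qed
    show "\<exists>\<theta> :: real \<Rightarrow> real.
          (\<forall>t\<in>I. (\<nu>t t = cosh (\<theta> t) *\<^sub>R \<mu> t + sinh (\<theta> t) *\<^sub>R \<nu> t \<or>
                   \<nu>t t = cosh (\<theta> t) *\<^sub>R \<mu> t - sinh (\<theta> t) *\<^sub>R \<nu> t) \<and>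
                  deriv r t + beta a \<mu> t * cosh (\<theta> t) = 0) \<or>
          (\<forall>t\<in>I. (\<nu>t t = - cosh (\<theta> t) *\<^sub>R \<mu> t + sinh (\<theta> t) *\<^sub>R \<nu> t \<or>
                   \<nu>t t = - cosh (\<theta> t) *\<^sub>R \<mu> t - sinh (\<theta> t) *\<^sub>R \<nu> t) \<and>
                  deriv r t - beta a \<mu> t * cosh (\<theta> t) = 0)"
    proof (intro exI[of _ \<theta>])
      show "(\<forall>t\<in>I. (\<nu>t t = cosh (\<theta> t) *\<^sub>R \<mu> t + sinh (\<theta> t) *\<^sub>R \<nu> t \<or>
                   \<nu>t t = cosh (\<theta> t) *\<^sub>R \<mu> t - sinh (\<theta> t) *\<^sub>R \<nu> t) \<and>
                  deriv r t + beta a \<mu> t * cosh (\<theta> t) = 0) \<or>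
          (\<forall>t\<in>I. (\<nu>t t = - cosh (\<theta> t) *\<^sub>R \<mu> t + sinh (\<theta> t) *\<^sub>R \<nu> t \<or>
                   \<nu>t t = - cosh (\<theta> t) *\<^sub>R \<mu> t - sinh (\<theta> t) *\<^sub>R \<nu> t) \<and>
                  deriv r t - beta a \<mu> t * cosh (\<theta> t) = 0)"
        using sign
      proof
        assume p: "\<forall>t\<in>I. x t > 0"
        have "\<forall>t\<in>I. (\<nu>t t = cosh (\<theta> t) *\<^sub>R \<mu> t + sinh (\<theta> t) *\<^sub>R \<nu> t) \<and>
                  deriv r t + beta a \<mu> t * cosh (\<theta> t) = 0"
          using p dec ch sh xb dr by (simp add: less_imp_le)
        then show ?thesis by blast
      next
        assume p: "\<forall>t\<in>I. x t < 0"
        have "\<forall>t\<in>I. (\<nu>t t = - cosh (\<theta> t) *\<^sub>R \<mu> t + sinh (\<theta> t) *\<^sub>R \<nu> t) \<and>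
                  deriv r t - beta a \<mu> t * cosh (\<theta> t) = 0"
        proof
          fix t assume tI: "t \<in> I"
          have "x t < 0" using p tI by blast
          then have c: "cosh (\<theta> t) = - x t" using ch[OF tI] by simp
          show "(\<nu>t t = - cosh (\<theta> t) *\<^sub>R \<mu> t + sinh (\<theta> t) *\<^sub>R \<nu> t) \<and>
                  deriv r t - beta a \<mu> t * cosh (\<theta> t) = 0"
            using dec[OF tI] c sh xb[OF tI] dr[OF tI] by simp
        qed
        then show ?thesis by blast
      qed
    qed
  qed
  have part2: "(\<forall>t\<in>I. eps (\<nu>t t) * eps (\<mu> t) = -1) \<longrightarrow>
       (\<exists>\<theta> :: real \<Rightarrow> real.
          \<forall>t\<in>I. (\<nu>t t = sinh (\<theta> t) *\<^sub>R \<mu> t + cosh (\<theta> t) *\<^sub>R \<nu> t \<or>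
                  \<nu>t t = sinh (\<theta> t) *\<^sub>R \<mu> t - cosh (\<theta> t) *\<^sub>R \<nu> t) \<and>
                 deriv r t - beta a \<mu> t * sinh (\<theta> t) = 0)"
  proof
    assume h: "\<forall>t\<in>I. eps (\<nu>t t) * eps (\<mu> t) = -1"
    have sge: "sg = - e" if "t \<in> I" for t
    proof -
      have "sg * e = -1" using h nt fr that by auto
      then show ?thesis using e sg by auto
    qed
    have xy: "(y t)^2 = 1 + (x t)^2" if tI: "t \<in> I" for t
    proof -
      have "e * ((y t)^2 - (x t)^2) = e * 1" using quad[OF tI] sge[OF tI] by (simp add: algebra_simps)
      then show ?thesis using e by auto
    qed
    have xb: "r' t - beta a \<mu> t * x t = 0" if tI: "t \<in> I" for t
    proof -
      have "e * (x t * beta a \<mu> t - r' t) = 0" using beq[OF tI] sge[OF tI] by (simp add: algebra_simps)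
      then show ?thesis using e by (auto simp: algebra_simps)
    qed
    define \<theta> where "\<theta> t = arsinh (x t)" for t
    have ch: "cosh (\<theta> t) = \<bar>y t\<bar>" if "t \<in> I" for t
    proof -
      have "(x t)^2 + 1 = (y t)^2" using xy[OF that] by simp
      then show ?thesis unfolding \<theta>_def cosh_arsinh_real by simp
    qed
    have sh: "sinh (\<theta> t) = x t" for t unfolding \<theta>_def by simp
    show "\<exists>\<theta> :: real \<Rightarrow> real.
          \<forall>t\<in>I. (\<nu>t t = sinh (\<theta> t) *\<^sub>R \<mu> t + cosh (\<theta> t) *\<^sub>R \<nu> t \<or>
                  \<nu>t t = sinh (\<theta> t) *\<^sub>R \<mu> t - cosh (\<theta> t) *\<^sub>R \<nu> t) \<and>
                 deriv r t - beta a \<mu> t * sinh (\<theta> t) = 0"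
    proof (intro exI[of _ \<theta>] ballI conjI)
      fix t assume tI: "t \<in> I"
      show "deriv r t - beta a \<mu> t * sinh (\<theta> t) = 0" using xb[OF tI] dr[OF tI] sh by simp
      show "\<nu>t t = sinh (\<theta> t) *\<^sub>R \<mu> t + cosh (\<theta> t) *\<^sub>R \<nu> t \<or>
                  \<nu>t t = sinh (\<theta> t) *\<^sub>R \<mu> t - cosh (\<theta> t) *\<^sub>R \<nu> t"
        using dec[OF tI] ch[OF tI] sh by (cases "y t \<ge> 0") auto
    qed
  qed
  show ?thesis using part1 part2 by blast
qed

end
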